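(* In the Setting below, for all $u,v,w,t\in V$: $$w\langle u,v\rangle+u\langle v,w\rangle+v\langle w,u\rangle=0,$$ $$\langle w,t\rangle\langle u,v\rangle+\langle u,t\rangle\langle v,w\rangle+\langle v,t\rangle\langle w,u\rangle=0,$$ where in the first identity elements of $U$ act on $V$ on the right, and in the second the products are taken in $U$.
   Context: Setting. Let $\mathbb F$ be a field of characteristic different from $2$ and $3$. A Malcev algebra is an anticommutative algebra $\mathcal M$ over $\mathbb F$ satisfying $(xz)(yt)=((xy)z)t+((yz)t)x+((zt)x)y+((tx)y)z$. Products are left-normed: $xyz=(xy)z$, $xyzt=((xy)z)t$. Put $J(x,y,z)=xyz+yzx+zxy$ (the Jacobian), $\{x,y,z\}=xyz-xzy+2x(yz)$, and $h(y,z,t,x,u)=\{yz,t,u\}x+\{yz,t,x\}u+\{yx,z,u\}t+\{yu,z,x\}t$. The variety $\mathcal H$ consists of the Malcev algebras satisfying $h(y,z,t,x,u)=0$ identically. The centroid $\Gamma(\mathcal M)$ is the set of linear maps $\alpha$ of $\mathcal M$ (written on the right) with $(xy)\alpha=x(y\alpha)=(x\alpha)y$ for all $x,y$. Put $p(x,y,z,t)=-\{zt,x,y\}-\{yt,z,x\}+\{xt,y,z\}$ and define the operator $\alpha(y,z,t)$ by $x\,\alpha(y,z,t)=p(x,y,z,t)$; for $\mathcal M\in\mathcal H$ these operators lie in $\Gamma(\mathcal M)$. Let $L=\mathfrak{sl}_2(\mathbb F)$ with basis $E,H,F$ and products $EH=E$, $FH=-F$, $EF=\tfrac12 H$. Standing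 assumption: $\mathcal M\in\mathcal H$ contains $L$ as a subalgebra and $mL\neq 0$ for every $0\neq m\in\mathcal M$. Define $N_{\mathcal M}=\{m\in\mathcal M: J(m,a,b)=0\ \forall a,b\in L\}$ and $J_{\mathcal M}=\{m\in\mathcal M:\{m,a,b\}=0\ \forall a,b\in L\}$. Known facts: $\mathcal M=N_{\mathcal M}\oplus J_{\mathcal M}$; $J_{\mathcal M}$ is a direct sum of $2$-dimensional $L$-submodules with bases $\{u,v\}$, $uH=u$, $vH=-v$, $uE=v$, $uF=0$, $vE=0$, $vF=-u$; letting $U$ be the linear span of the operators $\alpha(m,a,b)$ ($m\in\mathcal M$, $a,b\in L$), $U$ is a commutative associative subalgebra of $\Gamma(\mathcal M)$ and $N_{\mathcal M}=\sum_{\alpha\in U}L\alpha\cong L\otimes U$. Let $V=\{w\in J_{\mathcal M}: wH=w\}$, and for $w\in V$ put $w(1)=w$, $w(2)=wE$. There is a skew-symmetric bilinear map $\langle\cdot,\cdot\rangle:V\times V\to U$ with $u(1)v(1)=F\langle u,v\rangle$, $u(1)v(2)=u(2)v(1)=\tfrac12 H\langle u,v\rangle$, $u(2)v(2)=E\langle u,v\rangle$ for all $u,v\in V$. *)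

theory Defs
  imports Main "HOL.Vector_Spaces"
begin

text \<open>Products are left-normed and
operators (elements of the centroid) act on the right, i.e. x alpha = alpha x.\<close>

definition bilinear_prod :: "('k::field \<Rightarrow> 'm::ab_group_add \<Rightarrow> 'm) \<Rightarrow> ('m \<Rightarrow> 'm \<Rightarrow> 'm) \<Rightarrow> bool" where
  "bilinear_prod scale mul \<longleftrightarrow>
     (\<forall>x. Vector_Spaces.linear scale scale (mul x)) \<and>
     (\<forall>y. Vector_Spaces.linear scale scale (\<lambda>x. mul x y))"

definition malcev :: "('k::field \<Rightarrow> 'm::ab_group_add \<Rightarrow> 'm) \<Rightarrow> ('m \<Rightarrow> 'm \<Rightarrow> 'm) \<Rightarrow> bool" where
  "malcev scale mul \<longleftrightarrow> vector_space scale \<and> bilinear_prod scale mul \<and>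
     (\<forall>x y. mul x y = - mul y x) \<and>
     (\<forall>x y z t. mul (mul x z) (mul y t) =
        mul (mul (mul x y) z) t + mul (mul (mul y z) t) x +
        mul (mul (mul z t) x) y + mul (mul (mul t x) y) z)"

definition jacobian :: "('m::ab_group_add \<Rightarrow> 'm \<Rightarrow> 'm) \<Rightarrow> 'm \<Rightarrow> 'm \<Rightarrow> 'm \<Rightarrow> 'm" where
  "jacobian mul x y z = mul (mul x y) z + mul (mul y z) x + mul (mul z x) y"

definition trip :: "('k::field \<Rightarrow> 'm::ab_group_add \<Rightarrow> 'm) \<Rightarrow> ('m \<Rightarrow> 'm \<Rightarrow> 'm) \<Rightarrow> 'm \<Rightarrow> 'm \<Rightarrow> 'm \<Rightarrow> 'm" where
  "trip scale mul x y z = mul (mul x y) z - mul (mul x z) y + scale 2 (mul x (mul y z))"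

definition hpoly :: "('k::field \<Rightarrow> 'm::ab_group_add \<Rightarrow> 'm) \<Rightarrow> ('m \<Rightarrow> 'm \<Rightarrow> 'm) \<Rightarrow> 'm \<Rightarrow> 'm \<Rightarrow> 'm \<Rightarrow> 'm \<Rightarrow> 'm \<Rightarrow> 'm" where
  "hpoly scale mul y z t x u =
     mul (trip scale mul (mul y z) t u) x + mul (trip scale mul (mul y z) t x) u +
     mul (trip scale mul (mul y x) z u) t + mul (trip scale mul (mul y u) z x) t"

definition in_H :: "('k::field \<Rightarrow> 'm::ab_group_add \<Rightarrow> 'm) \<Rightarrow> ('m \<Rightarrow> 'm \<Rightarrow> 'm) \<Rightarrow> bool" where
  "in_H scale mul \<longleftrightarrow> malcev scale mul \<and> (\<forall>y z t x u. hpoly scale mul y z t x u = 0)"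

definition centroid :: "('k::field \<Rightarrow> 'm::ab_group_add \<Rightarrow> 'm) \<Rightarrow> ('m \<Rightarrow> 'm \<Rightarrow> 'm) \<Rightarrow> ('m \<Rightarrow> 'm) set" where
  "centroid scale mul = {\<alpha>. Vector_Spaces.linear scale scale \<alpha> \<and>
      (\<forall>x y. \<alpha> (mul x y) = mul x (\<alpha> y) \<and> \<alpha> (mul x y) = mul (\<alpha> x) y)}"

definition pfun :: "('k::field \<Rightarrow> 'm::ab_group_add \<Rightarrow> 'm) \<Rightarrow> ('m \<Rightarrow> 'm \<Rightarrow> 'm) \<Rightarrow> 'm \<Rightarrow> 'm \<Rightarrow> 'm \<Rightarrow> 'm \<Rightarrow> 'm" where
  "pfun scale mul x y z t =
     - trip scale mul (mul z t) x y - trip scale mul (mul y t) z x + trip scale mul (mul x t) y z"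

definition alpha_op :: "('k::field \<Rightarrow> 'm::ab_group_add \<Rightarrow> 'm) \<Rightarrow> ('m \<Rightarrow> 'm \<Rightarrow> 'm) \<Rightarrow> 'm \<Rightarrow> 'm \<Rightarrow> 'm \<Rightarrow> ('m \<Rightarrow> 'm)" where
  "alpha_op scale mul y z t = (\<lambda>x. pfun scale mul x y z t)"

definition Uspan :: "('k::field \<Rightarrow> 'm::ab_group_add \<Rightarrow> 'm) \<Rightarrow> ('m \<Rightarrow> 'm \<Rightarrow> 'm) \<Rightarrow> 'm set \<Rightarrow> ('m \<Rightarrow> 'm) set" where
  "Uspan scale mul L = {f. \<exists>(n::nat) c ms as bs. (\<forall>i<n. as i \<in> L \<and> bs i \<in> L) \<and>
      f = (\<lambda>x. \<Sum>i<n. scale (c i) (alpha_op scale mul (ms i) (as i) (bs i) x))}"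

definition N_M :: "('m::ab_group_add \<Rightarrow> 'm \<Rightarrow> 'm) \<Rightarrow> 'm set \<Rightarrow> 'm set" where
  "N_M mul L = {m. \<forall>a\<in>L. \<forall>b\<in>L. jacobian mul m a b = 0}"

definition J_M :: "('k::field \<Rightarrow> 'm::ab_group_add \<Rightarrow> 'm) \<Rightarrow> ('m \<Rightarrow> 'm \<Rightarrow> 'm) \<Rightarrow> 'm set \<Rightarrow> 'm set" where
  "J_M scale mul L = {m. \<forall>a\<in>L. \<forall>b\<in>L. trip scale mul m a b = 0}"

definition Vset :: "('k::field \<Rightarrow> 'm::ab_group_add \<Rightarrow> 'm) \<Rightarrow> ('m \<Rightarrow> 'm \<Rightarrow> 'm) \<Rightarrow> 'm set \<Rightarrow> 'm \<Rightarrow> 'm set" where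
  "Vset scale mul L H = {w \<in> J_M scale mul L. mul w H = w}"

end

theory Submission
  imports Defs
begin

definition mdiff :: "('m::ab_group_add \<Rightarrow> 'm \<Rightarrow> 'm) \<Rightarrow> 'm \<Rightarrow> 'm \<Rightarrow> 'm \<Rightarrow> 'm \<Rightarrow> 'm" where
  "mdiff mul x y z t = mul (mul x z) (mul y t) - (mul (mul (mul x y) z) t + mul (mul (mul y z) t) x +
        mul (mul (mul z t) x) y + mul (mul (mul t x) y) z)"

context
  fixes scale :: "'k::field \<Rightarrow> 'm::ab_group_add \<Rightarrow> 'm" and mul :: "'m \<Rightarrow> 'm \<Rightarrow> 'm"
  assumes MA: "malcev scale mul"
begin

lemma VS: "vector_space scale" using MA unfolding malcev_def by auto

lemma BP: "bilinear_prod scale mul" using MA unfolding malcev_def by blast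
lemma linR: "Vector_Spaces.linear scale scale (mul x)"
proof -
  have "\<forall>x. Vector_Spaces.linear scale scale (mul x)" using BP unfolding bilinear_prod_def by (rule conjunct1)
  thus ?thesis by (rule spec)
qed
lemma linL: "Vector_Spaces.linear scale scale (\<lambda>x. mul x y)"
proof -
  have "\<forall>y. Vector_Spaces.linear scale scale (\<lambda>x. mul x y)" using BP unfolding bilinear_prod_def by (rule conjunct2)
  thus ?thesis by (rule spec)
qed

lemma madd_r: "mul x (a + b) = mul x a + mul x b"
proof -
  have "\<forall>p q. mul x (p + q) = mul x p + mul x q" using linR[of x] unfolding linear_iff by blast
  thus ?thesis by blast
qed
lemma madd_l: "mul (a + b) x = mul a x + mul b x"
proof -
  have "\<forall>p q. mul (p + q) x = mul p x + mul q x" using linL[of x] unfolding linear_iff by blast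
  thus ?thesis by blast
qed
lemma msc_r: "mul x (scale c a) = scale c (mul x a)"
proof -
  have "\<forall>c p. mul x (scale c p) = scale c (mul x p)" using linR[of x] unfolding linear_iff by blast
  thus ?thesis by blast
qed
lemma msc_l: "mul (scale c a) x = scale c (mul a x)"
proof -
  have "\<forall>c p. mul (scale c p) x = scale c (mul p x)" using linL[of x] unfolding linear_iff by blast
  thus ?thesis by blast
qed
lemma mzero_r: "mul x 0 = 0"
proof -
  have "mul x 0 + mul x 0 = mul x 0 + 0" using madd_r[of x 0 0] by simp
  thus ?thesis by (rule add_left_imp_eq)
qed
lemma mzero_l: "mul 0 x = 0"
proof -
  have "mul 0 x + mul 0 x = mul 0 x + 0" using madd_l[of 0 0 x] by simp
  thus ?thesis by (rule add_left_imp_eq)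
qed
lemma mneg_r: "mul x (- a) = - mul x a"
proof -
  have "mul x a + mul x (- a) = 0" using madd_r[of x a "- a"] by (simp add: mzero_r)
  thus ?thesis by (simp add: add_eq_0_iff)
qed
lemma mneg_l: "mul (- a) x = - mul a x"
proof -
  have "mul a x + mul (- a) x = 0" using madd_l[of a "- a" x] by (simp add: mzero_l)
  thus ?thesis by (simp add: add_eq_0_iff)
qed
lemma mdiff_r: "mul x (a - b) = mul x a - mul x b" using madd_r[of x a "- b"] mneg_r[of x b] by simp
lemma mdiff_l: "mul (a - b) x = mul a x - mul b x" using madd_l[of a "- b" x] mneg_l[of b x] by simp
lemma anti: "mul x y = - mul y x"
proof -
  have "\<forall>x y. mul x y = - mul y x" using MA unfolding malcev_def by blast
  thus ?thesis by blast
qed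
lemma mdiff0: "mdiff mul x y z t = 0"
proof -
  have "\<forall>x y z t. mul (mul x z) (mul y t) =
        mul (mul (mul x y) z) t + mul (mul (mul y z) t) x +
        mul (mul (mul z t) x) y + mul (mul (mul t x) y) z" using MA unfolding malcev_def by blast
  thus ?thesis unfolding mdiff_def by simp
qed
lemma MOD: "module scale" using VS by (simp add: module_iff_vector_space)
lemma sc0: "scale 0 x = 0" by (rule module.scale_zero_left[OF MOD])
lemma sc1: "scale 1 x = x" by (rule module.scale_one[OF MOD])
lemma scm: "scale (- c) x = - scale c x" by (rule module.scale_minus_left[OF MOD])
lemma scadd: "scale (a + b) x = scale a x + scale b x" by (rule module.scale_left_distrib[OF MOD])
lemma scaddr: "scale a (x + y) = scale a x + scale a y" by (rule module.scale_right_distrib[OF MOD])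
lemma scsc: "scale a (scale b x) = scale (a * b) x" by (rule module.scale_scale[OF MOD])
lemma scz: "scale c 0 = 0"
proof -
  have "scale c 0 + scale c 0 = scale c 0 + 0" using scaddr[of c 0 0] by simp
  thus ?thesis by (rule add_left_imp_eq)
qed
lemma scale2: "scale 2 x = x + x"
  using scadd[of 1 1 x] by (simp add: sc1)

lemmas bil = madd_r madd_l mneg_r mneg_l mdiff_r mdiff_l

end
datatype tr = TV nat | TM tr tr
datatype ex = EV nat | EA ex ex | EN ex | ES ex ex | EP ex ex | E2 ex

fun tlt :: "tr \<Rightarrow> tr \<Rightarrow> bool" where
  "tlt (TV i) (TV j) = (i < j)"
| "tlt (TV i) (TM a b) = True"
| "tlt (TM a b) (TV j) = False"
| "tlt (TM a b) (TM c d) = (tlt a c \<or> (a = c \<and> tlt b d))"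

definition cm :: "tr \<Rightarrow> tr \<Rightarrow> int \<times> tr" where
  "cm a b = (if tlt b a then (-1, TM b a) else (1, TM a b))"

fun nrm :: "ex \<Rightarrow> (int \<times> tr) list" where
  "nrm (EV i) = [(1, TV i)]"
| "nrm (EA a b) = nrm a @ nrm b"
| "nrm (EN a) = map (\<lambda>(c,t). (-c,t)) (nrm a)"
| "nrm (ES a b) = nrm a @ map (\<lambda>(c,t). (-c,t)) (nrm b)"
| "nrm (E2 a) = map (\<lambda>(c,t). (2*c,t)) (nrm a)"
| "nrm (EP a b) = concat (map (\<lambda>(c,t). map (\<lambda>(d,s). (c * d * fst (cm t s), snd (cm t s))) (nrm b)) (nrm a))"

fun ins :: "int \<times> tr \<Rightarrow> (int \<times> tr) list \<Rightarrow> (int \<times> tr) list" where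
  "ins p [] = [p]"
| "ins (c,t) ((d,s)#L) = (if t = s then (c+d,s)#L else (d,s) # ins (c,t) L)"

definition chk :: "ex \<Rightarrow> bool" where
  "chk e \<longleftrightarrow> filter (\<lambda>p. fst p \<noteq> 0) (foldr ins (nrm e) []) = []"

fun evt :: "('m \<Rightarrow> 'm \<Rightarrow> 'm) \<Rightarrow> 'm list \<Rightarrow> tr \<Rightarrow> 'm" where
  "evt mul vs (TV i) = vs ! i"
| "evt mul vs (TM a b) = mul (evt mul vs a) (evt mul vs b)"

fun eve :: "('k::field \<Rightarrow> 'm::ab_group_add \<Rightarrow> 'm) \<Rightarrow> ('m \<Rightarrow> 'm \<Rightarrow> 'm) \<Rightarrow> 'm list \<Rightarrow> ex \<Rightarrow> 'm" where
  "eve sc mul vs (EV i) = vs ! i"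
| "eve sc mul vs (EA a b) = eve sc mul vs a + eve sc mul vs b"
| "eve sc mul vs (EN a) = - eve sc mul vs a"
| "eve sc mul vs (ES a b) = eve sc mul vs a - eve sc mul vs b"
| "eve sc mul vs (EP a b) = mul (eve sc mul vs a) (eve sc mul vs b)"
| "eve sc mul vs (E2 a) = sc 2 (eve sc mul vs a)"

definition evs :: "('k::field \<Rightarrow> 'm::ab_group_add \<Rightarrow> 'm) \<Rightarrow> ('m \<Rightarrow> 'm \<Rightarrow> 'm) \<Rightarrow> 'm list \<Rightarrow> (int \<times> tr) list \<Rightarrow> 'm" where
  "evs sc mul vs L = sum_list (map (\<lambda>(c,t). sc (of_int c) (evt mul vs t)) L)"

definition etrip where "etrip a b c = EA (ES (EP (EP a b) c) (EP (EP a c) b)) (E2 (EP a (EP b c)))"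
definition epf where "epf x y z t = EA (ES (EN (etrip (EP z t) x y)) (etrip (EP y t) z x)) (etrip (EP x t) y z)"
definition ehp where "ehp y z t x u = EA (EA (EA (EP (etrip (EP y z) t u) x) (EP (etrip (EP y z) t x) u))
     (EP (etrip (EP y x) z u) t)) (EP (etrip (EP y u) z x) t)"
definition emd where "emd x y z t = ES (EP (EP x z) (EP y t)) (EA (EA (EA (EP (EP (EP x y) z) t) (EP (EP (EP y z) t) x))
        (EP (EP (EP z t) x) y)) (EP (EP (EP t x) y) z))"

context
  fixes scale :: "'k::field \<Rightarrow> 'm::ab_group_add \<Rightarrow> 'm" and mul :: "'m \<Rightarrow> 'm \<Rightarrow> 'm" and vs :: "'m list"
  assumes MA: "malcev scale mul"
begin

lemma evs_nil[simp]: "evs scale mul vs [] = 0" by (simp add: evs_def)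
lemma evs_cons: "evs scale mul vs ((c,t)#L) = scale (of_int c) (evt mul vs t) + evs scale mul vs L"
  by (simp add: evs_def)
lemma evs_app: "evs scale mul vs (L1 @ L2) = evs scale mul vs L1 + evs scale mul vs L2"
  by (simp add: evs_def)

lemma evs_neg: "evs scale mul vs (map (\<lambda>(c,t). (-c,t)) L) = - evs scale mul vs L"
  by (induction L) (auto simp: evs_cons scm[OF MA])

lemma evs_dbl: "evs scale mul vs (map (\<lambda>(c,t). (2*c,t)) L) = scale 2 (evs scale mul vs L)"
  by (induction L) (auto simp: evs_cons scz[OF MA] scaddr[OF MA] scsc[OF MA])

lemma cm_sound: "scale (of_int (fst (cm a b))) (evt mul vs (snd (cm a b))) = mul (evt mul vs a) (evt mul vs b)"
  by (simp add: cm_def sc1[OF MA] scm[OF MA] flip: anti[OF MA])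

lemma evs_prod1: "mul (scale (of_int c) (evt mul vs t)) (evs scale mul vs L) =
   evs scale mul vs (map (\<lambda>(d,s). (c * d * fst (cm t s), snd (cm t s))) L)"
proof (induction L)
  case Nil thus ?case by (simp add: mzero_r[OF MA])
next
  case (Cons p L)
  obtain d s where p: "p = (d,s)" by force
  have "mul (scale (of_int c) (evt mul vs t)) (scale (of_int d) (evt mul vs s)) =
     scale (of_int (c * d * fst (cm t s))) (evt mul vs (snd (cm t s)))"
  proof -
    have "mul (scale (of_int c) (evt mul vs t)) (scale (of_int d) (evt mul vs s)) =
       scale (of_int c * of_int d) (mul (evt mul vs t) (evt mul vs s))"
      by (simp add: msc_l[OF MA] msc_r[OF MA] scsc[OF MA] mult.commute)
    also have "mul (evt mul vs t) (evt mul vs s) = scale (of_int (fst (cm t s))) (evt mul vs (snd (cm t s)))"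
      by (rule cm_sound[symmetric])
    finally show ?thesis by (simp add: scsc[OF MA])
  qed
  thus ?case using Cons by (simp add: p evs_cons madd_r[OF MA])
qed

lemma evs_prod: "mul (evs scale mul vs L1) (evs scale mul vs L2) =
  evs scale mul vs (concat (map (\<lambda>(c,t). map (\<lambda>(d,s). (c * d * fst (cm t s), snd (cm t s))) L2) L1))"
proof (induction L1)
  case Nil thus ?case by (simp add: mzero_l[OF MA])
next
  case (Cons p L)
  obtain c t where p: "p = (c,t)" by force
  show ?case using Cons by (simp add: p evs_cons madd_l[OF MA] evs_app evs_prod1)
qed

lemma nrm_sound: "evs scale mul vs (nrm e) = eve scale mul vs e"
  by (induction e) (simp_all add: evs_cons sc1[OF MA] evs_app evs_neg evs_dbl flip: evs_prod)

lemma ins_sound: "evs scale mul vs (ins p L) = evs scale mul vs [p] + evs scale mul vs L"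
proof (induction p L rule: ins.induct)
  case (1 p) thus ?case by simp
next
  case (2 c t d s L)
  show ?case
  proof (cases "t = s")
    case True thus ?thesis by (simp add: evs_cons scadd[OF MA] algebra_simps)
  next
    case False thus ?thesis using 2 by (simp add: evs_cons algebra_simps)
  qed
qed

lemma foldr_sound: "evs scale mul vs (foldr ins L []) = evs scale mul vs L"
proof (induction L)
  case Nil thus ?case by simp
next
  case (Cons p L)
  obtain c t where p: "p = (c,t)" by force
  show ?case using Cons by (simp add: ins_sound p evs_cons)
qed

lemma filter_sound: "evs scale mul vs (filter (\<lambda>p. fst p \<noteq> 0) L) = evs scale mul vs L"
proof (induction L)
  case Nil thus ?case by simp
next
  case (Cons p L)
  obtain c t where p: "p = (c,t)" by force
  show ?case using Cons by (simp add: p evs_cons sc0[OF MA])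
qed

lemma chk_sound: "chk e \<Longrightarrow> eve scale mul vs e = 0"
  unfolding chk_def by (metis evs_nil filter_sound foldr_sound nrm_sound)

lemma eve_trip: "eve scale mul vs (etrip a b c) = trip scale mul (eve scale mul vs a) (eve scale mul vs b) (eve scale mul vs c)"
  by (simp add: etrip_def trip_def)
lemma eve_pf: "eve scale mul vs (epf a b c d) = pfun scale mul (eve scale mul vs a) (eve scale mul vs b) (eve scale mul vs c) (eve scale mul vs d)"
  by (simp add: epf_def pfun_def eve_trip)
lemma eve_hp: "eve scale mul vs (ehp a b c d e) = hpoly scale mul (eve scale mul vs a) (eve scale mul vs b) (eve scale mul vs c) (eve scale mul vs d) (eve scale mul vs e)"
  by (simp add: ehp_def hpoly_def eve_trip)
lemma eve_md: "eve scale mul vs (emd a b c d) = mdiff mul (eve scale mul vs a) (eve scale mul vs b) (eve scale mul vs c) (eve scale mul vs d)"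
  by (simp add: emd_def mdiff_def)

end
definition Cen :: "('k::field \<Rightarrow> 'm::ab_group_add \<Rightarrow> 'm) \<Rightarrow> ('m \<Rightarrow> 'm \<Rightarrow> 'm) \<Rightarrow> ('m \<Rightarrow> 'm) \<Rightarrow> bool" where
  "Cen sc mul f \<longleftrightarrow> (\<forall>x y. f (mul x y) = mul x (f y)) \<and> (\<forall>x y. f (mul x y) = mul (f x) y) \<and>
     (\<forall>a b. f (a + b) = f a + f b) \<and> (\<forall>c a. f (sc c a) = sc c (f a))"

lemma CenD1: "Cen sc mul f \<Longrightarrow> f (mul x y) = mul x (f y)" unfolding Cen_def by blast
lemma CenD2: "Cen sc mul f \<Longrightarrow> f (mul x y) = mul (f x) y" unfolding Cen_def by blast
lemma CenD3: "Cen sc mul f \<Longrightarrow> f (a + b) = f a + f b" unfolding Cen_def by blast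
lemma CenD4: "Cen sc mul f \<Longrightarrow> f (sc c a) = sc c (f a)" unfolding Cen_def by blast
lemma Cen_zero: "Cen sc mul f \<Longrightarrow> f 0 = 0"
proof -
  assume C: "Cen sc mul f"
  have "f 0 + f 0 = f 0 + 0" using CenD3[OF C, of 0 0] by simp
  thus ?thesis by (rule add_left_imp_eq)
qed
lemma Cen_neg: "Cen sc mul f \<Longrightarrow> f (- a) = - f a"
proof -
  assume C: "Cen sc mul f"
  have "f a + f (- a) = 0" using CenD3[OF C, of a "- a"] Cen_zero[OF C] by simp
  thus ?thesis by (simp add: add_eq_0_iff)
qed

context
  fixes scale :: "'k::field \<Rightarrow> 'm::ab_group_add \<Rightarrow> 'm" and mul :: "'m \<Rightarrow> 'm \<Rightarrow> 'm"
  assumes MA: "malcev scale mul"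
begin

lemma scdr: "scale c (a - b) = scale c a - scale c b" by (rule module.scale_right_diff_distrib[OF MOD[OF MA]])
lemma scnr: "scale c (- a) = - scale c a" by (rule module.scale_minus_right[OF MOD[OF MA]])

lemma Cen_comp: "Cen scale mul f \<Longrightarrow> Cen scale mul g \<Longrightarrow> Cen scale mul (\<lambda>x. f (g x))"
proof -
  assume f: "Cen scale mul f" and g: "Cen scale mul g"
  have 1: "\<And>x y. f (g (mul x y)) = mul x (f (g y))" by (simp add: CenD1[OF f] CenD1[OF g])
  have 2: "\<And>x y. f (g (mul x y)) = mul (f (g x)) y" by (simp add: CenD2[OF f] CenD2[OF g])
  have 3: "\<And>a b. f (g (a + b)) = f (g a) + f (g b)" by (simp add: CenD3[OF f] CenD3[OF g])
  have 4: "\<And>c a. f (g (scale c a)) = scale c (f (g a))" by (simp add: CenD4[OF f] CenD4[OF g])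
  show ?thesis unfolding Cen_def using 1 2 3 4 by blast
qed
lemma Cen_add: "Cen scale mul f \<Longrightarrow> Cen scale mul g \<Longrightarrow> Cen scale mul (\<lambda>x. f x + g x)"
proof -
  assume f: "Cen scale mul f" and g: "Cen scale mul g"
  have 1: "\<And>x y. f (mul x y) + g (mul x y) = mul x (f y + g y)" by (simp add: CenD1[OF f] CenD1[OF g] madd_r[OF MA])
  have 2: "\<And>x y. f (mul x y) + g (mul x y) = mul (f x + g x) y" by (simp add: CenD2[OF f] CenD2[OF g] madd_l[OF MA])
  have 3: "\<And>a b. f (a + b) + g (a + b) = (f a + g a) + (f b + g b)" by (simp add: CenD3[OF f] CenD3[OF g] add_ac)
  have 4: "\<And>c a. f (scale c a) + g (scale c a) = scale c (f a + g a)" by (simp add: CenD4[OF f] CenD4[OF g] scaddr[OF MA])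
  show ?thesis unfolding Cen_def using 1 2 3 4 by blast
qed

lemma mul_sum_r: "mul x (\<Sum>i<(n::nat). g i) = (\<Sum>i<n. mul x (g i))"
  by (induction n) (simp_all add: madd_r[OF MA] mzero_r[OF MA])
lemma sc_sum: "scale d (\<Sum>i<(n::nat). g i) = (\<Sum>i<n. scale d (g i))"
  by (induction n) (simp_all add: scaddr[OF MA] scz[OF MA])

lemma trip_add1: "trip scale mul (a + b) y z = trip scale mul a y z + trip scale mul b y z"
  unfolding trip_def by (simp only: bil[OF MA] scaddr[OF MA]) (simp add: algebra_simps)
lemma trip_add2: "trip scale mul x (a + b) z = trip scale mul x a z + trip scale mul x b z"
  unfolding trip_def by (simp only: bil[OF MA] scaddr[OF MA]) (simp add: algebra_simps)
lemma trip_add3: "trip scale mul x y (a + b) = trip scale mul x y a + trip scale mul x y b"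
  unfolding trip_def by (simp only: bil[OF MA] scaddr[OF MA]) (simp add: algebra_simps)
lemma trip_sc1: "trip scale mul (scale c a) y z = scale c (trip scale mul a y z)"
  unfolding trip_def by (simp add: msc_l[OF MA] msc_r[OF MA] scsc[OF MA] scdr scaddr[OF MA] mult.commute)
lemma trip_sc2: "trip scale mul x (scale c a) z = scale c (trip scale mul x a z)"
  unfolding trip_def by (simp add: msc_l[OF MA] msc_r[OF MA] scsc[OF MA] scdr scaddr[OF MA] mult.commute)
lemma trip_sc3: "trip scale mul x y (scale c a) = scale c (trip scale mul x y a)"
  unfolding trip_def by (simp add: msc_l[OF MA] msc_r[OF MA] scsc[OF MA] scdr scaddr[OF MA] mult.commute)

lemma pf_add: "pfun scale mul (a + b) y z t = pfun scale mul a y z t + pfun scale mul b y z t"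
  unfolding pfun_def by (simp only: madd_l[OF MA] trip_add1 trip_add2 trip_add3) (simp add: algebra_simps)
lemma pf_sc: "pfun scale mul (scale c a) y z t = scale c (pfun scale mul a y z t)"
  unfolding pfun_def by (simp add: msc_l[OF MA] trip_sc1 trip_sc2 trip_sc3 scdr scaddr[OF MA] scnr)

end

context
  fixes scale :: "'k::field \<Rightarrow> 'm::ab_group_add \<Rightarrow> 'm" and mul :: "'m \<Rightarrow> 'm \<Rightarrow> 'm"
  assumes MA: "malcev scale mul" and HH: "\<And>y z t x u. hpoly scale mul y z t x u = 0"
begin

lemma big_id: "pfun scale mul (mul x u) y z t = mul x (pfun scale mul u y z t)"
proof -
  have c: "chk (ES (ES (epf (EP (EV 0) (EV 1)) (EV 2) (EV 3) (EV 4)) (EP (EV 0) (epf (EV 1) (EV 2) (EV 3) (EV 4)))) (EA (EN (ehp (EV 3) (EV 1) (EV 0) (EV 2) (EV 4))) (EA (ehp (EV 2) (EV 1) (EV 0) (EV 3) (EV 4)) (EA (emd (EP (EV 0) (EV 3)) (EV 1) (EV 2) (EV 4)) (EA (emd (EP (EV 0) (EV 2)) (EV 1) (EV 4) (EV 3)) (EA (ehp (EV 1) (EV 2) (EV 3) (EV 0) (EV 4)) (EA (EN (E2 (ehp (EV 1) (EV 3) (EV 0) (EV 2) (EV 4)))) (EA (EN (E2 (emd (EP (EV 2) (EV 3)) (EV 0) (EV 1) (EV 4)))) (EA (EN (EP (emd (EV 0) (EV 2) (EV 3) (EV 4)) (EV 1))) (EA (EN (EP (emd (EV 0) (EV 2)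 (EV 4) (EV 3)) (EV 1))) (EA (EN (ehp (EV 2) (EV 3) (EV 0) (EV 1) (EV 4))) (EA (ehp (EV 2) (EV 0) (EV 4) (EV 1) (EV 3)) (EA (ehp (EV 2) (EV 0) (EV 1) (EV 3) (EV 4)) (EA (EN (emd (EV 1) (EP (EV 0) (EV 3)) (EV 2) (EV 4))) (EA (EP (emd (EV 0) (EV 3) (EV 2) (EV 4)) (EV 1)) (EA (ehp (EV 0) (EV 3) (EV 1) (EV 2) (EV 4)) (EA (EN (emd (EP (EV 1) (EV 4)) (EV 0) (EV 2) (EV 3))) (EA (EN (E2 (ehp (EV 0) (EV 2) (EV 3) (EV 1) (EV 4)))) (EA (EN (ehp (EV 0) (EV 1) (EV 3) (EV 2) (EV 4))) (EA (EN (emd (EV 2) (EP (EV 0) (EV 1)) (EV 3) (EV 4))) (EA (ehp (EV 0) (EV 2) (EV 1) (EV 3) (EV 4)) (EA (EN (emd (EV 1) (EP (EV 0) (EV 3)) (EV 4) (EV 2))) (EA (EN (emd (EP (EV 0) (EV 1)) (EV 2) (EV 4) (EV 3))) (EA (EN (emd (EV 1) (EP (EV 0) (EV 4)) (EV 2) (EV 3))) (EA (E2 (EP (emd (EV 0) (EV 1) (EV 2) (EV 3)) (EV 4))) (EA (ehp (EV 1) (EV 0) (EV 3) (EV 2) (EV 4)) (EA (E2 (emd (EP (EV 1) (EV 2)) (EV 0) (EV 4) (EV 3))) (EA (EN (E2 (EP (emd (EV 0) (EV 1) (EV 3) (EV 2)) (EV 4)))) (EA (emd (EP (EV 1) (EV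 2)) (EV 0) (EV 3) (EV 4)) (EA (emd (EV 0) (EP (EV 1) (EV 2)) (EV 3) (EV 4)) (EA (EN (emd (EP (EV 1) (EV 3)) (EV 0) (EV 4) (EV 2))) (EA (EN (ehp (EV 0) (EV 1) (EV 4) (EV 2) (EV 3))) (EA (ehp (EV 1) (EV 0) (EV 2) (EV 3) (EV 4)) (EA (emd (EV 0) (EP (EV 1) (EV 2)) (EV 4) (EV 3)) (EA (EN (emd (EV 0) (EP (EV 1) (EV 3)) (EV 4) (EV 2))) (EA (EN (emd (EV 0) (EP (EV 1) (EV 3)) (EV 2) (EV 4))) (EA (ehp (EV 1) (EV 2) (EV 0) (EV 3) (EV 4)) (EA (E2 (emd (EV 0) (EP (EV 2) (EV 3)) (EV 1) (EV 4))) (EA (EN (EP (emd (EV 1) (EV 2) (EV 3) (EV 4)) (EV 0))) (EA (EN (EP (emd (EV 1) (EV 2) (EV 4) (EV 3)) (EV 0))) (EA (EP (emd (EV 1) (EV 3) (EV 2) (EV 4)) (EV 0)) (EA (EN (emd (EV 0) (EP (EV 1) (EV 4)) (EV 3) (EV 2))) (EA (EN (emd (EV 0) (EP (EV 1) (EV 4)) (EV 2) (EV 3))) (EA (emd (EV 1) (EP (EV 0) (EV 2)) (EV 3) (EV 4)) (EA (emd (EV 1) (EP (EV 0) (EV 2)) (EV 4) (EV 3)) (EA (emd (EP (EV 0) (EV 4)) (EV 1) (EV 3) (EV 2)) (EA (emd (EV 1) (EP (EV 0) (EV 4)) (EV 3) (EV 2)) (EA (EN (E2 (emd (EV 0) (EV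 2) (EP (EV 1) (EV 4)) (EV 3)))) (EA (EN (E2 (emd (EP (EV 0) (EV 1)) (EV 2) (EV 3) (EV 4)))) (EA (E2 (ehp (EV 1) (EV 0) (EV 4) (EV 2) (EV 3))) (EN (E2 (emd (EV 2) (EV 3) (EP (EV 0) (EV 1)) (EV 4))))))))))))))))))))))))))))))))))))))))))))))))))))))"
    by code_simp
  have "eve scale mul [x,u,y,z,t] (ES (ES (epf (EP (EV 0) (EV 1)) (EV 2) (EV 3) (EV 4)) (EP (EV 0) (epf (EV 1) (EV 2) (EV 3) (EV 4)))) (EA (EN (ehp (EV 3) (EV 1) (EV 0) (EV 2) (EV 4))) (EA (ehp (EV 2) (EV 1) (EV 0) (EV 3) (EV 4)) (EA (emd (EP (EV 0) (EV 3)) (EV 1) (EV 2) (EV 4)) (EA (emd (EP (EV 0) (EV 2)) (EV 1) (EV 4) (EV 3)) (EA (ehp (EV 1) (EV 2) (EV 3) (EV 0) (EV 4)) (EA (EN (E2 (ehp (EV 1) (EV 3) (EV 0) (EV 2) (EV 4)))) (EA (EN (E2 (emd (EP (EV 2) (EV 3)) (EV 0) (EV 1) (EV 4)))) (EA (EN (EP (emd (EV 0) (EV 2) (EV 3) (EV 4)) (EV 1))) (EA (EN (EP (emd (EV 0) (EV 2) (EV 4) (EV 3)) (EV 1))) (EA (EN (ehp (EV 2) (EV 3) (EV 0) (EV 1) (EV 4))) (EA (ehp (EV 2) (EV 0) (EV 4) (EV 1) (EV 3)) (EA (ehp (EV 2) (EV 0) (EV 1) (EV 3) (EV 4)) (EA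 (EN (emd (EV 1) (EP (EV 0) (EV 3)) (EV 2) (EV 4))) (EA (EP (emd (EV 0) (EV 3) (EV 2) (EV 4)) (EV 1)) (EA (ehp (EV 0) (EV 3) (EV 1) (EV 2) (EV 4)) (EA (EN (emd (EP (EV 1) (EV 4)) (EV 0) (EV 2) (EV 3))) (EA (EN (E2 (ehp (EV 0) (EV 2) (EV 3) (EV 1) (EV 4)))) (EA (EN (ehp (EV 0) (EV 1) (EV 3) (EV 2) (EV 4))) (EA (EN (emd (EV 2) (EP (EV 0) (EV 1)) (EV 3) (EV 4))) (EA (ehp (EV 0) (EV 2) (EV 1) (EV 3) (EV 4)) (EA (EN (emd (EV 1) (EP (EV 0) (EV 3)) (EV 4) (EV 2))) (EA (EN (emd (EP (EV 0) (EV 1)) (EV 2) (EV 4) (EV 3))) (EA (EN (emd (EV 1) (EP (EV 0) (EV 4)) (EV 2) (EV 3))) (EA (E2 (EP (emd (EV 0) (EV 1) (EV 2) (EV 3)) (EV 4))) (EA (ehp (EV 1) (EV 0) (EV 3) (EV 2) (EV 4)) (EA (E2 (emd (EP (EV 1) (EV 2)) (EV 0) (EV 4) (EV 3))) (EA (EN (E2 (EP (emd (EV 0) (EV 1) (EV 3) (EV 2)) (EV 4)))) (EA (emd (EP (EV 1) (EV 2)) (EV 0) (EV 3) (EV 4)) (EA (emd (EV 0) (EP (EV 1) (EV 2)) (EV 3) (EV 4)) (EA (EN (emd (EP (EV 1) (EV 3)) (EV 0) (EV 4) (EV 2))) (EA (EN (ehp (EV 0) (EV 1) (EV 4) (EV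 2) (EV 3))) (EA (ehp (EV 1) (EV 0) (EV 2) (EV 3) (EV 4)) (EA (emd (EV 0) (EP (EV 1) (EV 2)) (EV 4) (EV 3)) (EA (EN (emd (EV 0) (EP (EV 1) (EV 3)) (EV 4) (EV 2))) (EA (EN (emd (EV 0) (EP (EV 1) (EV 3)) (EV 2) (EV 4))) (EA (ehp (EV 1) (EV 2) (EV 0) (EV 3) (EV 4)) (EA (E2 (emd (EV 0) (EP (EV 2) (EV 3)) (EV 1) (EV 4))) (EA (EN (EP (emd (EV 1) (EV 2) (EV 3) (EV 4)) (EV 0))) (EA (EN (EP (emd (EV 1) (EV 2) (EV 4) (EV 3)) (EV 0))) (EA (EP (emd (EV 1) (EV 3) (EV 2) (EV 4)) (EV 0)) (EA (EN (emd (EV 0) (EP (EV 1) (EV 4)) (EV 3) (EV 2))) (EA (EN (emd (EV 0) (EP (EV 1) (EV 4)) (EV 2) (EV 3))) (EA (emd (EV 1) (EP (EV 0) (EV 2)) (EV 3) (EV 4)) (EA (emd (EV 1) (EP (EV 0) (EV 2)) (EV 4) (EV 3)) (EA (emd (EP (EV 0) (EV 4)) (EV 1) (EV 3) (EV 2)) (EA (emd (EV 1) (EP (EV 0) (EV 4)) (EV 3) (EV 2)) (EA (EN (E2 (emd (EV 0) (EV 2) (EP (EV 1) (EV 4)) (EV 3)))) (EA (EN (E2 (emd (EP (EV 0) (EV 1)) (EV 2) (EV 3) (EV 4)))) (EA (E2 (ehp (EV 1) (EV 0) (EV 4) (EV 2) (EV 3))) (EN (E2 (emd (EV 2) (EV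 3) (EP (EV 0) (EV 1)) (EV 4)))))))))))))))))))))))))))))))))))))))))))))))))))))) = 0"
    by (rule chk_sound[OF MA c])
  hence "pfun scale mul (mul x u) y z t - mul x (pfun scale mul u y z t) = 0"
    by (simp add: eve_pf[OF MA] eve_hp[OF MA] eve_md[OF MA] HH mdiff0[OF MA] mzero_l[OF MA] scz[OF MA])
  thus ?thesis by simp
qed


lemma Uspan_Cen:
  assumes f: "f \<in> Uspan scale mul L"
  shows "Cen scale mul f"
proof -
  obtain n :: nat and c ms as bs where fe: "f = (\<lambda>x. \<Sum>i<n. scale (c i) (alpha_op scale mul (ms i) (as i) (bs i) x))"
    using f unfolding Uspan_def by blast
  have fe2: "f = (\<lambda>x. \<Sum>i<n. scale (c i) (pfun scale mul x (ms i) (as i) (bs i)))"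
    unfolding fe alpha_op_def by simp
  have A: "\<And>a b. f (a + b) = f a + f b"
    unfolding fe2 by (simp add: pf_add[OF MA] scaddr[OF MA] sum.distrib)
  have S: "\<And>d a. f (scale d a) = scale d (f a)"
    unfolding fe2 by (simp add: pf_sc[OF MA] scsc[OF MA] sc_sum[OF MA] mult.commute)
  have M1: "\<And>x y. f (mul x y) = mul x (f y)"
    unfolding fe2 by (simp add: big_id mul_sum_r[OF MA] msc_r[OF MA])
  have N: "\<And>a. f (- a) = - f a"
  proof -
    fix a
    have "f 0 + f 0 = f 0 + 0" using A[of 0 0] by simp
    hence z: "f 0 = 0" by (rule add_left_imp_eq)
    have "f a + f (- a) = 0" using A[of a "- a"] z by simp
    thus "f (- a) = - f a" by (simp add: add_eq_0_iff)
  qed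
  have M2: "\<And>x y. f (mul x y) = mul (f x) y"
  proof -
    fix x y
    have "f (mul x y) = f (- mul y x)" using anti[OF MA, of x y] by simp
    also have "\<dots> = - mul y (f x)" by (simp add: N M1)
    also have "\<dots> = mul (f x) y" using anti[OF MA, of "f x" y] by simp
    finally show "f (mul x y) = mul (f x) y" .
  qed
  show ?thesis unfolding Cen_def using A S M1 M2 by blast
qed

end
theorem mainTheorem7:
  fixes scale :: "'k::field \<Rightarrow> 'm::ab_group_add \<Rightarrow> 'm"
    and mul :: "'m \<Rightarrow> 'm \<Rightarrow> 'm"
    and E H F :: 'm
    and br :: "'m \<Rightarrow> 'm \<Rightarrow> ('m \<Rightarrow> 'm)"
  assumes char2: "(2::'k) \<noteq> 0" and char3: "(3::'k) \<noteq> 0"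
    and inH: "in_H scale mul"
    and EH: "mul E H = E" and FH: "mul F H = - F" and EF: "mul E F = scale (1/2) H"
    and indep: "\<not> module.dependent scale {E, H, F}" and dist: "card {E, H, F} = 3"
    and faithful: "\<forall>m. m \<noteq> 0 \<longrightarrow> (\<exists>a\<in>module.span scale {E, H, F}. mul m a \<noteq> 0)"
    and br_U: "\<forall>u\<in>Vset scale mul (module.span scale {E, H, F}) H.
                \<forall>v\<in>Vset scale mul (module.span scale {E, H, F}) H.
                  br u v \<in> Uspan scale mul (module.span scale {E, H, F})"
    and br_skew: "\<forall>u\<in>Vset scale mul (module.span scale {E, H, F}) H.
                \<forall>v\<in>Vset scale mul (module.span scale {E, H, F}) H.
                  br u v = (\<lambda>x. - br v u x)"
    and br_lin: "\<forall>u\<in>Vset scale mul (module.span scale {E, H, F}) H.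
                \<forall>u'\<in>Vset scale mul (module.span scale {E, H, F}) H.
                \<forall>v\<in>Vset scale mul (module.span scale {E, H, F}) H. \<forall>c.
                  br (scale c u + u') v = (\<lambda>x. scale c (br u v x) + br u' v x)"
    and br_11: "\<forall>u\<in>Vset scale mul (module.span scale {E, H, F}) H.
                \<forall>v\<in>Vset scale mul (module.span scale {E, H, F}) H.
                  mul u v = br u v F"
    and br_12: "\<forall>u\<in>Vset scale mul (module.span scale {E, H, F}) H.
                \<forall>v\<in>Vset scale mul (module.span scale {E, H, F}) H.
                  mul u (mul v E) = scale (1/2) (br u v H) \<and>
                  mul (mul u E) v = scale (1/2) (br u v H)"
    and br_22: "\<forall>u\<in>Vset scale mul (module.span scale {E, H, F}) H.
                \<forall>v\<in>Vset scale mul (module.span scale {E, H, F}) H.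
                  mul (mul u E) (mul v E) = br u v E"
  shows "\<forall>u\<in>Vset scale mul (module.span scale {E, H, F}) H.
         \<forall>v\<in>Vset scale mul (module.span scale {E, H, F}) H.
         \<forall>w\<in>Vset scale mul (module.span scale {E, H, F}) H.
         \<forall>t\<in>Vset scale mul (module.span scale {E, H, F}) H.
           br u v w + br v w u + br w u v = 0 \<and>
           (\<forall>x. br u v (br w t x) + br v w (br u t x) + br w u (br v t x) = 0)"
proof -
  have MA: "malcev scale mul" using inH unfolding in_H_def by blast
  have HH: "\<And>y z t x u. hpoly scale mul y z t x u = 0" using inH unfolding in_H_def by blast
  define S where "S = module.span scale {E, H, F}"
  define VV where "VV = Vset scale mul S H"
  note VS = VS[OF MA] and MOD = MOD[OF MA]
  note madd_r = madd_r[OF MA] and madd_l = madd_l[OF MA] and msc_r = msc_r[OF MA] and msc_l = msc_l[OF MA]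
    and mzero_r = mzero_r[OF MA] and mzero_l = mzero_l[OF MA] and mneg_r = mneg_r[OF MA] and mneg_l = mneg_l[OF MA]
    and anti = anti[OF MA] and mdiff0 = mdiff0[OF MA] and sc1 = sc1[OF MA] and scsc = scsc[OF MA]
    and scaddr = scaddr[OF MA] and scz = scz[OF MA] and scadd = scadd[OF MA] and scale2 = scale2[OF MA]
    and scnr = scnr[OF MA]
  have brU: "\<And>u v. u \<in> VV \<Longrightarrow> v \<in> VV \<Longrightarrow> br u v \<in> Uspan scale mul S"
    using br_U unfolding VV_def S_def by blast
  have Cbr: "\<And>u v. u \<in> VV \<Longrightarrow> v \<in> VV \<Longrightarrow> Cen scale mul (br u v)"
    using brU Uspan_Cen[OF MA HH] by blast
  have skew: "\<And>u v x. u \<in> VV \<Longrightarrow> v \<in> VV \<Longrightarrow> br u v x = - br v u x"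
    using br_skew unfolding VV_def S_def by metis
  have b11: "\<And>u v. u \<in> VV \<Longrightarrow> v \<in> VV \<Longrightarrow> mul u v = br u v F"
    using br_11 unfolding VV_def S_def by blast
  have b12a: "\<And>u v. u \<in> VV \<Longrightarrow> v \<in> VV \<Longrightarrow> mul u (mul v E) = scale (1/2) (br u v H)"
    using br_12 unfolding VV_def S_def by blast
  have b12b: "\<And>u v. u \<in> VV \<Longrightarrow> v \<in> VV \<Longrightarrow> mul (mul u E) v = scale (1/2) (br u v H)"
    using br_12 unfolding VV_def S_def by blast
  have ES: "E \<in> S" "H \<in> S" "F \<in> S" unfolding S_def by (simp_all add: module.span_base[OF MOD])
  have VJ: "\<And>w a b. w \<in> VV \<Longrightarrow> a \<in> S \<Longrightarrow> b \<in> S \<Longrightarrow> trip scale mul w a b = 0"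
    unfolding VV_def Vset_def J_M_def by blast
  have VH: "\<And>w. w \<in> VV \<Longrightarrow> mul w H = w"
    unfolding VV_def Vset_def by blast
  have faith: "\<And>m. m \<noteq> 0 \<Longrightarrow> \<exists>a\<in>S. mul m a \<noteq> 0" using faithful unfolding S_def by blast
  have two_half: "(2::'k) * (1/2) = 1" using char2 by simp
  have half2: "\<And>a. scale 2 (scale (1/2) a) = a" by (simp only: scsc two_half sc1)
  have HF: "mul H F = F" using anti[of H F] FH by simp
  have FE: "mul F E = - scale (1/2) H" using anti[of F E] EF by simp
  have HHz: "mul H H = 0"
  proof -
    have "mul H H + mul H H = 0" using anti[of H H] by (simp add: add_eq_0_iff)
    hence "scale 2 (mul H H) = 0" by (simp add: scale2)
    thus ?thesis using char2 vector_space.scale_eq_0_iff[OF VS] by blast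
  qed
  have six: "(6::'k) \<noteq> 0"
  proof -
    have h: "(2::'k) * 3 \<noteq> 0" by (rule no_zero_divisors[OF char2 char3])
    have eq: "(2::'k) * 3 = 6" by simp
    show ?thesis using h eq by metis
  qed
  have VF: "\<And>w. w \<in> VV \<Longrightarrow> mul w F = 0"
  proof -
    fix w assume w: "w \<in> VV"
    define x where "x = mul w F"
    have "trip scale mul w H F = 0" using VJ[OF w] ES by blast
    hence "mul (mul w H) F - mul (mul w F) H + scale 2 (mul w (mul H F)) = 0" unfolding trip_def .
    hence "x - mul x H + scale 2 x = 0" by (simp add: VH[OF w] HF x_def)
    hence x3a: "mul x H = x + scale 2 x" by (simp add: algebra_simps)
    have "scale 3 x = scale (1 + 2) x" by simp
    also have "\<dots> = x + scale 2 x" by (simp only: scadd sc1)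
    finally have x3: "mul x H = scale 3 x" using x3a by simp
    have m: "mdiff mul w F H H = 0" by (rule mdiff0)
    have t0: "mul (mul w H) (mul F H) = - x" by (simp add: VH[OF w] FH mneg_r x_def)
    have t1: "mul (mul (mul w F) H) H = scale 9 x"
      by (simp add: x_def[symmetric] x3 msc_l scsc)
    have t2: "mul (mul (mul F H) H) w = - x"
      using anti[of F w] by (simp add: FH mneg_l x_def)
    have t3: "mul (mul (mul H H) w) F = 0" by (simp add: HHz mzero_l)
    have t4: "mul (mul (mul H w) F) H = - scale 3 x"
      using anti[of H w] by (simp add: VH[OF w] mneg_l x_def[symmetric] x3)
    have e: "- x - (scale 9 x + - x + 0 + - scale 3 x) = 0"
      using m unfolding mdiff_def t0 t1 t2 t3 t4 .
    have "scale 6 x = scale (9 - 3) x" by simp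
    also have "\<dots> = scale 9 x - scale 3 x" by (rule module.scale_left_diff_distrib[OF MOD])
    also have "\<dots> = - (- x - (scale 9 x + - x + 0 + - scale 3 x))" by (simp add: algebra_simps)
    also have "\<dots> = 0" using e by simp
    finally have "scale 6 x = 0" .
    thus "mul w F = 0" using six vector_space.scale_eq_0_iff[OF VS] x_def by blast
  qed
  have VEF: "\<And>w. w \<in> VV \<Longrightarrow> mul (mul w E) F = - w"
  proof -
    fix w assume w: "w \<in> VV"
    have "trip scale mul w E F = 0" using VJ[OF w] ES by blast
    hence "mul (mul w E) F - mul (mul w F) E + scale 2 (mul w (mul E F)) = 0" unfolding trip_def .
    hence "mul (mul w E) F + w = 0" by (simp add: VF[OF w] mzero_l EF msc_r VH[OF w] half2)
    thus "mul (mul w E) F = - w" by (simp add: eq_neg_iff_add_eq_0)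
  qed
  have I1: "\<And>u v w. u \<in> VV \<Longrightarrow> v \<in> VV \<Longrightarrow> w \<in> VV \<Longrightarrow> br u v w + br v w u + br w u v = 0"
  proof -
    fix u v w assume u: "u \<in> VV" and v: "v \<in> VV" and w: "w \<in> VV"
    note Cuv = Cbr[OF u v] and Cvw = Cbr[OF v w] and Cuw = Cbr[OF u w]
    define h :: 'k where "h = 1/2"
    have Hu: "mul H u = - u" using anti[of H u] VH[OF u] by simp
    have Hv: "mul H v = - v" using anti[of H v] VH[OF v] by simp
    have Hw: "mul H w = - w" using anti[of H w] VH[OF w] by simp
    have L: "mul (mul u w) (mul v E) = br u w v"
    proof -
      have "mul (mul u w) (mul v E) = mul (br u w F) (mul v E)" by (simp add: b11[OF u w])
      also have "\<dots> = br u w (mul F (mul v E))" by (rule CenD2[OF Cuw, symmetric])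
      also have "mul F (mul v E) = v" using anti[of F "mul v E"] VEF[OF v] by simp
      finally show ?thesis .
    qed
    have T1: "mul (mul (mul u v) w) E = 0"
    proof -
      have "mul (mul u v) w = mul (br u v F) w" by (simp add: b11[OF u v])
      also have "\<dots> = br u v (mul F w)" by (rule CenD2[OF Cuv, symmetric])
      also have "mul F w = 0" using anti[of F w] VF[OF w] by simp
      finally have "mul (mul u v) w = 0" using Cen_zero[OF Cuv] by simp
      thus ?thesis by (simp add: mzero_l)
    qed
    have T2: "mul (mul (mul v w) E) u = scale h (br v w u)"
    proof -
      have "mul (mul v w) E = mul (br v w F) E" by (simp add: b11[OF v w])
      also have "\<dots> = br v w (mul F E)" by (rule CenD2[OF Cvw, symmetric])
      finally have a: "mul (mul (mul v w) E) u = mul (br v w (mul F E)) u" by simp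
      also have "\<dots> = br v w (mul (mul F E) u)" by (rule CenD2[OF Cvw, symmetric])
      also have "mul (mul F E) u = scale h u" by (simp add: FE mneg_l msc_l Hu scnr h_def)
      also have "br v w (scale h u) = scale h (br v w u)" by (rule CenD4[OF Cvw])
      finally show ?thesis .
    qed
    have T3: "mul (mul (mul w E) u) v = scale h (br u w v)"
    proof -
      have "mul (mul w E) u = - mul u (mul w E)" by (rule anti)
      also have "\<dots> = - scale h (br u w H)" by (simp add: b12a[OF u w] h_def)
      finally have "mul (mul (mul w E) u) v = - scale h (mul (br u w H) v)" by (simp add: mneg_l msc_l)
      also have "mul (br u w H) v = br u w (mul H v)" by (rule CenD2[OF Cuw, symmetric])
      also have "br u w (mul H v) = - br u w v" by (simp add: Hv Cen_neg[OF Cuw])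
      finally show ?thesis by (simp add: scnr)
    qed
    have T4: "mul (mul (mul E u) v) w = scale h (br u v w)"
    proof -
      have "mul (mul E u) v = - mul (mul u E) v" using anti[of E u] by (simp add: mneg_l)
      also have "\<dots> = - scale h (br u v H)" by (simp add: b12b[OF u v] h_def)
      finally have "mul (mul (mul E u) v) w = - scale h (mul (br u v H) w)" by (simp add: mneg_l msc_l)
      also have "mul (br u v H) w = br u v (mul H w)" by (rule CenD2[OF Cuv, symmetric])
      also have "br u v (mul H w) = - br u v w" by (simp add: Hw Cen_neg[OF Cuv])
      finally show ?thesis by (simp add: scnr)
    qed
    have m: "mdiff mul u v w E = 0" by (rule mdiff0)
    hence e: "br u w v - (0 + scale h (br v w u) + scale h (br u w v) + scale h (br u v w)) = 0"
      unfolding mdiff_def L T1 T2 T3 T4 .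
    define A where "A = br u v w"
    define B where "B = br v w u"
    define C where "C = br w u v"
    have uwv: "br u w v = - C" unfolding C_def by (rule skew[OF u w])
    have e2: "- C = scale h B + scale h (- C) + scale h A"
      using e unfolding uwv A_def[symmetric] B_def[symmetric] by simp
    have h2: "\<And>a. scale 2 (scale h a) = a" unfolding h_def by (rule half2)
    have "scale 2 (- C) = scale 2 (scale h B + scale h (- C) + scale h A)" using e2 by simp
    also have "\<dots> = B + - C + A" by (simp only: scaddr h2)
    finally have "- C + - C = B + - C + A" by (simp only: scale2)
    hence "A + B + C = 0"
    proof -
      assume q: "- C + - C = B + - C + A"
      from q have q': "- C = B + A" by simp
      have "A + B + C = (B + A) - (- C)" by (simp add: algebra_simps)
      also have "\<dots> = 0" by (simp only: q'[symmetric] diff_self)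
      finally show ?thesis .
    qed
    thus "br u v w + br v w u + br w u v = 0" unfolding A_def B_def C_def .
  qed
  have kill: "\<And>\<beta>. Cen scale mul \<beta> \<Longrightarrow> \<beta> F = 0 \<Longrightarrow> (\<forall>x. \<beta> x = 0)"
  proof -
    fix \<beta> :: "'m \<Rightarrow> 'm" assume C: "Cen scale mul \<beta>" and bF: "\<beta> F = 0"
    have Hx: "H = scale 2 (mul E F)" by (simp add: EF half2)
    have bH: "\<beta> H = 0"
    proof -
      have "\<beta> H = scale 2 (\<beta> (mul E F))" by (subst Hx) (rule CenD4[OF C])
      also have "\<beta> (mul E F) = mul E (\<beta> F)" by (rule CenD1[OF C])
      finally show ?thesis by (simp add: bF mzero_r scz)
    qed
    have bE: "\<beta> E = 0"
    proof -
      have "\<beta> E = \<beta> (mul E H)" by (simp add: EH)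
      also have "\<dots> = mul E (\<beta> H)" by (rule CenD1[OF C])
      finally show ?thesis by (simp add: bH mzero_r)
    qed
    have bS: "\<And>a. a \<in> S \<Longrightarrow> \<beta> a = 0"
    proof -
      fix a assume "a \<in> S"
      hence aS: "a \<in> module.span scale {E, H, F}" unfolding S_def .
      show "\<beta> a = 0"
      proof (rule module.span_induct_alt[OF MOD aS, where h="\<lambda>a. \<beta> a = 0"])
        show "\<beta> 0 = 0" by (rule Cen_zero[OF C])
      next
        fix c x y assume x: "x \<in> {E, H, F}" and y: "\<beta> y = 0"
        have "\<beta> x = 0" using x bE bH bF by auto
        thus "\<beta> (scale c x + y) = 0" using y by (simp add: CenD3[OF C] CenD4[OF C] scz)
      qed
    qed
    show "\<forall>x. \<beta> x = 0"
    proof (rule allI, rule ccontr)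
      fix x assume nz: "\<beta> x \<noteq> 0"
      then obtain a where a: "a \<in> S" and ne: "mul (\<beta> x) a \<noteq> 0" using faith by blast
      have "mul (\<beta> x) a = \<beta> (mul x a)" by (rule CenD2[OF C, symmetric])
      also have "\<dots> = mul x (\<beta> a)" by (rule CenD1[OF C])
      also have "\<dots> = 0" by (simp add: bS[OF a] mzero_r)
      finally show False using ne by simp
    qed
  qed
  have I2: "\<And>u v w t x. u \<in> VV \<Longrightarrow> v \<in> VV \<Longrightarrow> w \<in> VV \<Longrightarrow> t \<in> VV \<Longrightarrow>
      br u v (br w t x) + br v w (br u t x) + br w u (br v t x) = 0"
  proof -
    fix u v w t x assume u: "u \<in> VV" and v: "v \<in> VV" and w: "w \<in> VV" and t: "t \<in> VV"
    define \<beta> where "\<beta> = (\<lambda>x. br u v (br w t x) + br v w (br u t x) + br w u (br v t x))"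
    have C: "Cen scale mul \<beta>" unfolding \<beta>_def
      by (rule Cen_add[OF MA Cen_add[OF MA Cen_comp[OF MA Cbr[OF u v] Cbr[OF w t]] Cen_comp[OF MA Cbr[OF v w] Cbr[OF u t]]]
               Cen_comp[OF MA Cbr[OF w u] Cbr[OF v t]]])
    have "\<beta> F = br u v (mul w t) + br v w (mul u t) + br w u (mul v t)"
      unfolding \<beta>_def by (simp add: b11[OF w t] b11[OF u t] b11[OF v t])
    also have "\<dots> = mul (br u v w) t + mul (br v w u) t + mul (br w u v) t"
      by (simp add: CenD2[OF Cbr[OF u v]] CenD2[OF Cbr[OF v w]] CenD2[OF Cbr[OF w u]])
    also have "\<dots> = mul (br u v w + br v w u + br w u v) t" by (simp add: madd_l)
    also have "\<dots> = 0" by (simp add: I1[OF u v w] mzero_l)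
    finally have "\<beta> F = 0" .
    with kill[OF C] have "\<beta> x = 0" by blast
    thus "br u v (br w t x) + br v w (br u t x) + br w u (br v t x) = 0" unfolding \<beta>_def .
  qed
  show ?thesis
    using I1 I2 unfolding VV_def S_def by blast
qed

end
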